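(* Let $S=\mathbb{K}[x_1,\dots,x_n]$ be a polynomial ring over a field $\mathbb{K}$, and let $\mathcal{C}$ be a clutter whose vertex set is a subset of $\{x_1,\dots,x_n\}$, with edge ideal $I(\mathcal{C})\subset S$, and let $M=S/I(\mathcal{C})$. Then there is a chain $0=M_0\subset M_1\subset\cdots\subset M_m=M$ of $\mathbb{Z}^n$-graded submodules such that for each $i$, $M_i/M_{i-1}\cong (S/P_i)(-\mathbf{a}_i)$ where $P_i$ is a monomial prime ideal with $\dim(S/P_i)\ge \epsilon(\mathcal{C})+n-|V(\mathcal{C}^{\mathrm{red}})|$ and $\mathbf{a}_i\in\{0,1\}^n$ is a squarefree vector.
   Context: A clutter $\mathcal{C}$ consists of a finite vertex set $V(\mathcal{C})$ and a collection $E(\mathcal{C})$ of subsets of $V(\mathcal{C})$ (edges), no edge containing another. Vertices are identified with variables; the edge ideal is $I(\mathcal{C})=(\prod_{x\in e}x : e\in E(\mathcal{C}))$. Two distinct vertices are neighbors if some edge contains both. A vertex is isolated if it lies in no edge; $\mathcal{C}^{\mathrm{red}}$ is the clutter obtained by removing isolated vertices. An edge is trivial if it has exactly one vertex. A set $F\subseteq E(\mathcal{C})$ is edgewise dominant if every vertex $v\in V(\mathcal{C}^{\mathrm{red}})$ that is neither contained in an edge of $F$ nor contained in a trivial edge has a neighbor contained in some edge of $F$; $\epsilon(\mathcal{C})=\min\{|F| : F\subseteq E(\mathcal{C}) \text{ edgewise dominant}\}$. *)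

theory Defs
  imports Main "HOL-Library.Poly_Mapping" "HOL-Library.Extended_Nat"
begin

(* The polynomial ring S = K[x_j : j in 'n] in n = CARD('n) variables indexed by a finite
  type 'n. *)

type_synonym ('n, 'k) mpoly = "('n \<Rightarrow>\<^sub>0 nat) \<Rightarrow>\<^sub>0 'k"

definition var :: "'n \<Rightarrow> ('n, 'k::field) mpoly" where
  "var j = Poly_Mapping.single (Poly_Mapping.single j 1) 1"

definition monom :: "('n \<Rightarrow>\<^sub>0 nat) \<Rightarrow> ('n, 'k::field) mpoly" where
  "monom u = Poly_Mapping.single u 1"

definition is_ideal :: "('n, 'k::field) mpoly set \<Rightarrow> bool" where
  "is_ideal J \<longleftrightarrow> 0 \<in> J \<and> (\<forall>f\<in>J. \<forall>g\<in>J. f + g \<in> J) \<and> (\<forall>r. \<forall>f\<in>J. r * f \<in> J)"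

definition ideal_gen :: "('n, 'k::field) mpoly set \<Rightarrow> ('n, 'k) mpoly set" where
  "ideal_gen G = \<Inter>{J. is_ideal J \<and> G \<subseteq> J}"

definition is_prime_ideal :: "('n, 'k::field) mpoly set \<Rightarrow> bool" where
  "is_prime_ideal P \<longleftrightarrow> is_ideal P \<and> P \<noteq> UNIV \<and> (\<forall>a b. a * b \<in> P \<longrightarrow> a \<in> P \<or> b \<in> P)"

definition monomial_ideal :: "('n, 'k::field) mpoly set \<Rightarrow> bool" where
  "monomial_ideal J \<longleftrightarrow> (\<exists>G \<subseteq> range monom. J = ideal_gen G)"

definition monomial_prime :: "('n, 'k::field) mpoly set \<Rightarrow> bool" where
  "monomial_prime P \<longleftrightarrow> is_prime_ideal P \<and> monomial_ideal P"

definition graded_ideal :: "('n, 'k::field) mpoly set \<Rightarrow> bool" where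
  "graded_ideal J \<longleftrightarrow> is_ideal J \<and>
     (\<forall>f\<in>J. \<forall>u\<in>Poly_Mapping.keys f. Poly_Mapping.single u (Poly_Mapping.lookup f u) \<in> J)"

definition homogeneous_of :: "('n, 'k::field) mpoly \<Rightarrow> ('n \<Rightarrow>\<^sub>0 nat) \<Rightarrow> bool" where
  "homogeneous_of f d \<longleftrightarrow> Poly_Mapping.keys f \<subseteq> {d}"

(* graded_quot_iso Jp J P a: J \<subseteq> J' and the quotient J'/J is isomorphic, as a
  Z^n-graded S-module, to the shifted module (S/P)(-a).  Expressed via a map
  phi : J' \<rightarrow> S inducing an S-linear map J' \<rightarrow> S/P which is surjective, has kernel exactly J
  (hence induces an isomorphism J'/J \<cong> S/P), and sends elements of multidegree d into the
  multidegree-d component of (S/P)(-a), i.e. into the image of S_{d-a} (zero if d \<not>\<ge> a). *)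

definition graded_quot_iso ::
  "('n, 'k::field) mpoly set \<Rightarrow> ('n, 'k) mpoly set \<Rightarrow> ('n, 'k) mpoly set \<Rightarrow> ('n \<Rightarrow>\<^sub>0 nat) \<Rightarrow> bool" where
  "graded_quot_iso J' J P a \<longleftrightarrow> J \<subseteq> J' \<and>
     (\<exists>\<phi>. (\<forall>f\<in>J'. \<forall>g\<in>J'. \<phi> (f + g) = \<phi> f + \<phi> g)
        \<and> (\<forall>s. \<forall>f\<in>J'. \<phi> (s * f) - s * \<phi> f \<in> P)
        \<and> (\<forall>f\<in>J'. \<phi> f \<in> P \<longleftrightarrow> f \<in> J)
        \<and> (\<forall>g. \<exists>f\<in>J'. g - \<phi> f \<in> P)
        \<and> (\<forall>f\<in>J'. \<forall>d. homogeneous_of f d \<longrightarrow>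
              (\<exists>h. \<phi> f - h \<in> P \<and> (\<forall>u\<in>Poly_Mapping.keys h. u + a = d))))"

(* Krull dimension of S/P: supremum of lengths k of chains Q_0 \<subset> ... \<subset> Q_k of prime
  ideals of S containing P (these correspond to prime chains of S/P). *)

definition prime_chain :: "(nat \<Rightarrow> ('n, 'k::field) mpoly set) \<Rightarrow> nat \<Rightarrow> bool" where
  "prime_chain Q k \<longleftrightarrow> (\<forall>i\<le>k. is_prime_ideal (Q i)) \<and> (\<forall>i<k. Q i \<subset> Q (Suc i))"

definition dim_quot :: "('n, 'k::field) mpoly set \<Rightarrow> enat" where
  "dim_quot P = (SUP k \<in> {k. \<exists>Q. prime_chain Q k \<and> P \<subseteq> Q 0}. enat k)"

definition squarefree_vec :: "('n \<Rightarrow>\<^sub>0 nat) \<Rightarrow> bool" where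
  "squarefree_vec a \<longleftrightarrow> (\<forall>j. Poly_Mapping.lookup a j \<le> 1)"

(* Clutters on a vertex set V \<subseteq> 'n (vertices are identified with variables). *)

definition clutter :: "'n set \<Rightarrow> 'n set set \<Rightarrow> bool" where
  "clutter V E \<longleftrightarrow> (\<forall>e\<in>E. e \<subseteq> V) \<and> (\<forall>e1\<in>E. \<forall>e2\<in>E. e1 \<subseteq> e2 \<longrightarrow> e1 = e2)"

definition edge_monomial :: "'n set \<Rightarrow> ('n, 'k::field) mpoly" where
  "edge_monomial e = monom (\<Sum>j\<in>e. Poly_Mapping.single j 1)"

definition edge_ideal :: "'n set set \<Rightarrow> ('n, 'k::field) mpoly set" where
  "edge_ideal E = ideal_gen (edge_monomial ` E)"

(* Vertex set of the reduced clutter: the non-isolated vertices. *)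

definition red_vertices :: "'n set \<Rightarrow> 'n set set \<Rightarrow> 'n set" where
  "red_vertices V E = {v\<in>V. \<exists>e\<in>E. v \<in> e}"

definition neighbors :: "'n set set \<Rightarrow> 'n \<Rightarrow> 'n \<Rightarrow> bool" where
  "neighbors E u v \<longleftrightarrow> u \<noteq> v \<and> (\<exists>e\<in>E. u \<in> e \<and> v \<in> e)"

definition edgewise_dominant :: "'n set \<Rightarrow> 'n set set \<Rightarrow> 'n set set \<Rightarrow> bool" where
  "edgewise_dominant V E F \<longleftrightarrow> F \<subseteq> E \<and>
     (\<forall>v\<in>red_vertices V E. (\<not>(\<exists>e\<in>F. v \<in> e) \<and> \<not>(\<exists>e\<in>E. e = {v})) \<longrightarrow>
        (\<exists>u. neighbors E u v \<and> (\<exists>e\<in>F. u \<in> e)))"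

definition epsilon :: "'n set \<Rightarrow> 'n set set \<Rightarrow> nat" where
  "epsilon V E = (LEAST k. \<exists>F. edgewise_dominant V E F \<and> card F = k)"

end

theory Submission
  imports Defs
begin


abbreviation lk where "lk \<equiv> Poly_Mapping.lookup"
abbreviation ks where "ks \<equiv> Poly_Mapping.keys"
abbreviation sg where "sg \<equiv> Poly_Mapping.single"

definition ind :: "'n set \<Rightarrow> ('n \<Rightarrow>\<^sub>0 nat)" where
  "ind U = (\<Sum>j\<in>U. sg j 1)"

lemma lookup_ind: "finite U \<Longrightarrow> lk (ind U) j = (if j \<in> U then 1 else 0)"
  unfolding ind_def by (simp add: Poly_Mapping.lookup_sum Poly_Mapping.lookup_single when_def)

lemma keys_ind: "finite U \<Longrightarrow> ks (ind U) = U"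
  by (auto simp: in_keys_iff lookup_ind split: if_splits)

lemma keys_add_nat: "ks ((v::'a \<Rightarrow>\<^sub>0 nat) + w) = ks v \<union> ks w"
  by (auto simp: in_keys_iff lookup_add)

lemma lookup_single_if: "lk (sg k v) k' = (if k = k' then v else 0)"
  by (simp add: Poly_Mapping.lookup_single when_def)

definition cov :: "'n set set \<Rightarrow> 'n set \<Rightarrow> bool" where
  "cov G X \<longleftrightarrow> (\<exists>g\<in>G. g \<subseteq> X)"

lemma cov_mono: "cov G X \<Longrightarrow> X \<subseteq> Y \<Longrightarrow> cov G Y"
  unfolding cov_def by blast

definition Id :: "'n set set \<Rightarrow> ('n, 'k::field) mpoly set" where
  "Id G = {f. \<forall>w\<in>ks f. cov G (ks w)}"

lemma ideal_sum:
  assumes "is_ideal J" "\<And>x. x \<in> A \<Longrightarrow> h x \<in> J"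
  shows "sum h A \<in> J"
  using assms(2)
proof (induction A rule: infinite_finite_induct)
  case (infinite A) then show ?case using assms(1) by (simp add: is_ideal_def)
next
  case empty then show ?case using assms(1) by (simp add: is_ideal_def)
next
  case (insert x F) then show ?case using assms(1) by (simp add: is_ideal_def)
qed

lemma ideal_diff:
  assumes "is_ideal J" "f \<in> J" "g \<in> J" shows "f - g \<in> J"
proof -
  have "(-1) * g \<in> J" using assms unfolding is_ideal_def by blast
  then have "f + (-1) * g \<in> J" using assms unfolding is_ideal_def by blast
  then show ?thesis by (metis diff_conv_add_uminus mult_minus1)
qed

lemma poly_sum_single: "f = (\<Sum>w\<in>ks f. sg w (lk f w))"
proof (rule poly_mapping_eqI)
  fix k
  have "lk (\<Sum>w\<in>ks f. sg w (lk f w)) k = (\<Sum>w\<in>ks f. if w = k then lk f w else 0)"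
    by (simp add: Poly_Mapping.lookup_sum lookup_single_if)
  also have "\<dots> = lk f k"
    by (simp add: sum.delta in_keys_iff)
  finally show "lk f k = lk (\<Sum>w\<in>ks f. sg w (lk f w)) k" by simp
qed

lemma keys_mult_sub: "u \<in> ks (r * f) \<Longrightarrow> \<exists>a b. u = a + b \<and> a \<in> ks r \<and> b \<in> ks f"
  using Poly_Mapping.keys_mult by blast

lemma is_ideal_Id: "is_ideal (Id G :: ('n, 'k::field) mpoly set)"
  unfolding is_ideal_def Id_def
proof (intro conjI ballI allI)
  show "0 \<in> {f. \<forall>w\<in>ks f. cov G (ks w)}" by simp
next
  fix f g :: "('n, 'k) mpoly" assume f: "f \<in> {f. \<forall>w\<in>ks f. cov G (ks w)}" and g: "g \<in> {f. \<forall>w\<in>ks f. cov G (ks w)}"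
  show "f + g \<in> {f. \<forall>w\<in>ks f. cov G (ks w)}"
    using f g Poly_Mapping.keys_add[of f g] by blast
next
  fix r f :: "('n, 'k) mpoly" assume f: "f \<in> {f. \<forall>w\<in>ks f. cov G (ks w)}"
  show "r * f \<in> {f. \<forall>w\<in>ks f. cov G (ks w)}"
  proof (clarify)
    fix w assume "w \<in> ks (r * f)"
    then obtain a b where "w = a + b" "b \<in> ks f" using keys_mult_sub by blast
    then show "cov G (ks w)" using f cov_mono by (metis (no_types, lifting) Un_upper2 keys_add_nat mem_Collect_eq)
  qed
qed

lemma ind_le: "finite g \<Longrightarrow> g \<subseteq> ks w \<Longrightarrow> (w - ind g) + ind g = w"
  by (rule poly_mapping_eqI) (auto simp: lookup_add lookup_minus lookup_ind in_keys_iff)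

lemma monom_mult: "sg v c * monom u = sg (v + u) c"
  by (simp add: monom_def Poly_Mapping.mult_single)

lemma keys_monom: "ks (monom u :: ('n, 'k::field) mpoly) = {u}"
  by (simp add: monom_def)

lemma Id_gen:
  assumes fin: "\<forall>g\<in>G. finite g"
  shows "Id G = (ideal_gen (monom ` ind ` G) :: ('n, 'k::field) mpoly set)"
proof
  show "ideal_gen (monom ` ind ` G) \<subseteq> (Id G :: ('n, 'k::field) mpoly set)"
  proof -
    have "monom ` ind ` G \<subseteq> (Id G :: ('n, 'k::field) mpoly set)"
    proof
      fix x assume "x \<in> monom ` ind ` G"
      then obtain g where g: "g \<in> G" "x = monom (ind g)" by blast
      have "ks x = {ind g}" using g keys_monom by metis
      moreover have "ks (ind g) = g" using fin g keys_ind by blast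
      ultimately show "x \<in> Id G" using g unfolding Id_def cov_def by auto
    qed
    then show ?thesis unfolding ideal_gen_def using is_ideal_Id by blast
  qed
next
  show "Id G \<subseteq> (ideal_gen (monom ` ind ` G) :: ('n, 'k::field) mpoly set)"
  proof
    fix f :: "('n, 'k) mpoly" assume f: "f \<in> Id G"
    show "f \<in> ideal_gen (monom ` ind ` G)"
      unfolding ideal_gen_def
    proof (clarify)
      fix J :: "('n, 'k) mpoly set" assume J: "is_ideal J" "monom ` ind ` G \<subseteq> J"
      have "sg w (lk f w) \<in> J" if w: "w \<in> ks f" for w
      proof -
        obtain g where g: "g \<in> G" "g \<subseteq> ks w" using f w unfolding Id_def cov_def by blast
        have "sg w (lk f w) = sg (w - ind g) (lk f w) * monom (ind g)"
          using ind_le[of g w] fin g by (simp add: monom_mult)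
        moreover have "monom (ind g) \<in> J" using J g by blast
        ultimately show ?thesis using J(1) unfolding is_ideal_def by simp
      qed
      then have "(\<Sum>w\<in>ks f. sg w (lk f w)) \<in> J" by (rule ideal_sum[OF J(1)])
      then show "f \<in> J" using poly_sum_single[of f] by simp
    qed
  qed
qed

definition rho :: "'n list \<Rightarrow> ('n \<Rightarrow>\<^sub>0 nat) \<Rightarrow> (nat \<Rightarrow>\<^sub>0 nat)" where
  "rho xs v = Abs_poly_mapping (\<lambda>i. if i < length xs then lk v (xs ! i) else 0)"

lemma lookup_rho: "lk (rho xs v) i = (if i < length xs then lk v (xs ! i) else 0)"
proof -
  have "finite {i. (if i < length xs then lk v (xs ! i) else 0) \<noteq> 0}"
    by (rule finite_subset[of _ "{..<length xs}"]) auto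
  then show ?thesis unfolding rho_def by simp
qed

lemma rho_add: "rho xs (v + w) = rho xs v + rho xs w"
  by (rule poly_mapping_eqI) (simp add: lookup_rho lookup_add)

lemma rho_inj: "set xs = UNIV \<Longrightarrow> rho xs v = rho xs w \<Longrightarrow> v = w"
proof (rule poly_mapping_eqI)
  fix k assume "set xs = UNIV" "rho xs v = rho xs w"
  then obtain i where i: "i < length xs" "xs ! i = k" by (metis UNIV_I in_set_conv_nth)
  have "lk (rho xs v) i = lk (rho xs w) i" using \<open>rho xs v = rho xs w\<close> by simp
  then show "lk v k = lk w k" using i by (simp add: lookup_rho)
qed

lemma exists_max_rho:
  fixes F :: "('n \<Rightarrow>\<^sub>0 nat) set"
  assumes "finite F" "F \<noteq> {}"
  shows "\<exists>m\<in>F. \<forall>v\<in>F. rho xs v \<le> rho xs m"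
proof -
  have "Max (rho xs ` F) \<in> rho xs ` F" using assms by simp
  then obtain m where m: "m \<in> F" "rho xs m = Max (rho xs ` F)" by auto
  have "\<forall>v\<in>F. rho xs v \<le> rho xs m" unfolding m(2) using assms(1) by simp
  then show ?thesis using m(1) by blast
qed

lemma lookup_mult_zero:
  fixes x y :: "('n, 'k::field) mpoly"
  assumes "\<And>v w. v \<in> ks x \<Longrightarrow> w \<in> ks y \<Longrightarrow> v + w \<noteq> q"
  shows "lk (x * y) q = 0"
proof (rule ccontr)
  assume "lk (x * y) q \<noteq> 0"
  then have "q \<in> ks (x * y)" by (simp add: in_keys_iff)
  then show False using keys_mult_sub assms by metis
qed

lemma mpoly_no_zero_div:
  fixes a b :: "('n::finite, 'k::field) mpoly"
  assumes "a \<noteq> 0" "b \<noteq> 0"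
  shows "a * b \<noteq> 0"
proof -
  obtain xs :: "'n list" where xs: "set xs = UNIV" "distinct xs"
    using finite_distinct_list[of "UNIV :: 'n set"] by auto
  define r where "r = rho xs"
  have radd: "r (v + w) = r v + r w" for v w unfolding r_def by (rule rho_add)
  have rinj: "r v = r w \<Longrightarrow> v = w" for v w unfolding r_def using xs rho_inj by blast
  obtain mF where mF: "mF \<in> ks a" "\<forall>v\<in>ks a. r v \<le> r mF"
    using exists_max_rho[of "ks a" xs] assms unfolding r_def by auto
  obtain mG where mG: "mG \<in> ks b" "\<forall>v\<in>ks b. r v \<le> r mG"
    using exists_max_rho[of "ks b" xs] assms unfolding r_def by auto
  define a1 where "a1 = a - sg mF (lk a mF)"
  define b1 where "b1 = b - sg mG (lk b mG)"
  have ka1: "ks a1 \<subseteq> ks a - {mF}"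
    by (auto simp: a1_def in_keys_iff lookup_minus lookup_single_if split: if_splits)
  have kb1: "ks b1 \<subseteq> ks b - {mG}"
    by (auto simp: b1_def in_keys_iff lookup_minus lookup_single_if split: if_splits)
  have lt1: "r v < r mF" if "v \<in> ks a1" for v
    using that ka1 mF rinj by (metis DiffD1 DiffD2 insertI1 order_le_imp_less_or_eq subsetD)
  have lt2: "r w < r mG" if "w \<in> ks b1" for w
    using that kb1 mG rinj by (metis DiffD1 DiffD2 insertI1 order_le_imp_less_or_eq subsetD)
  have ksg1: "ks (sg mF (lk a mF)) \<subseteq> {mF}" by simp
  have ksg2: "ks (sg mG (lk b mG)) \<subseteq> {mG}" by simp
  have z1: "lk (sg mF (lk a mF) * b1) (mF + mG) = 0"
  proof (rule lookup_mult_zero)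
    fix v w assume "v \<in> ks (sg mF (lk a mF))" "w \<in> ks b1"
    then have "v = mF" "r w < r mG" using ksg1 lt2 by auto
    then have "r (v + w) < r (mF + mG)" by (simp add: radd)
    then show "v + w \<noteq> mF + mG" by auto
  qed
  have z2: "lk (a1 * sg mG (lk b mG)) (mF + mG) = 0"
  proof (rule lookup_mult_zero)
    fix v w assume "v \<in> ks a1" "w \<in> ks (sg mG (lk b mG))"
    then have "w = mG" "r v < r mF" using ksg2 lt1 by auto
    then have "r (v + w) < r (mF + mG)" by (simp add: radd)
    then show "v + w \<noteq> mF + mG" by auto
  qed
  have z3: "lk (a1 * b1) (mF + mG) = 0"
  proof (rule lookup_mult_zero)
    fix v w assume "v \<in> ks a1" "w \<in> ks b1"
    then have "r v < r mF" "r w < r mG" using lt1 lt2 by auto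
    then have "r (v + w) < r (mF + mG)" by (simp add: radd add_strict_mono)
    then show "v + w \<noteq> mF + mG" by auto
  qed
  have "a = sg mF (lk a mF) + a1" "b = sg mG (lk b mG) + b1" by (simp_all add: a1_def b1_def)
  then have "a * b = sg mF (lk a mF) * sg mG (lk b mG) + sg mF (lk a mF) * b1 + a1 * sg mG (lk b mG) + a1 * b1"
    by (metis (no_types, lifting) add.assoc distrib_left distrib_right)
  then have "lk (a * b) (mF + mG) = lk a mF * lk b mG"
    by (simp add: lookup_add z1 z2 z3 Poly_Mapping.mult_single)
  moreover have "lk a mF \<noteq> 0" "lk b mG \<noteq> 0" using mF mG by (auto simp: in_keys_iff)
  ultimately show ?thesis by auto
qed

definition PId :: "'n set \<Rightarrow> ('n, 'k::field) mpoly set" where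
  "PId Q = Id ((\<lambda>j. {j}) ` Q)"

lemma cov_single: "cov ((\<lambda>j. {j}) ` Q) X \<longleftrightarrow> X \<inter> Q \<noteq> {}"
  unfolding cov_def by auto

lemma mem_PId: "f \<in> PId Q \<longleftrightarrow> (\<forall>w\<in>ks f. ks w \<inter> Q \<noteq> {})"
  unfolding PId_def Id_def by (simp add: cov_single)

lemma is_ideal_PId: "is_ideal (PId Q :: ('n, 'k::field) mpoly set)"
  unfolding PId_def by (rule is_ideal_Id)

definition proj :: "'n set \<Rightarrow> ('n, 'k::field) mpoly \<Rightarrow> ('n, 'k) mpoly" where
  "proj Q a = Abs_poly_mapping (\<lambda>w. if ks w \<inter> Q = {} then lk a w else 0)"

lemma lookup_proj: "lk (proj Q a) w = (if ks w \<inter> Q = {} then lk a w else 0)"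
proof -
  have "finite {w. (if ks w \<inter> Q = {} then lk a w else 0) \<noteq> 0}"
    by (rule finite_subset[of _ "ks a"]) (auto simp: in_keys_iff)
  then show ?thesis unfolding proj_def by simp
qed

lemma proj_rest: "a - proj Q a \<in> PId Q"
  unfolding mem_PId by (auto simp: in_keys_iff lookup_minus lookup_proj)

lemma proj_keys: "w \<in> ks (proj Q a) \<Longrightarrow> ks w \<inter> Q = {}"
  by (auto simp: in_keys_iff lookup_proj split: if_splits)

lemma proj_nz: "a \<notin> PId Q \<Longrightarrow> proj Q a \<noteq> 0"
proof
  assume "a \<notin> PId Q" "proj Q a = 0"
  then obtain w where "w \<in> ks a" "ks w \<inter> Q = {}" unfolding mem_PId by auto
  then have "lk (proj Q a) w \<noteq> 0" by (simp add: lookup_proj in_keys_iff)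
  then show False using \<open>proj Q a = 0\<close> by simp
qed

lemma prime_PId: "is_prime_ideal (PId Q :: ('n::finite, 'k::field) mpoly set)"
  unfolding is_prime_ideal_def
proof (intro conjI allI impI)
  show "is_ideal (PId Q :: ('n, 'k) mpoly set)" by (rule is_ideal_PId)
  have "(1 :: ('n, 'k) mpoly) \<notin> PId Q" unfolding mem_PId by simp
  then show "PId Q \<noteq> (UNIV :: ('n, 'k) mpoly set)" by auto
next
  fix a b :: "('n, 'k) mpoly"
  assume ab: "a * b \<in> PId Q"
  show "a \<in> PId Q \<or> b \<in> PId Q"
  proof (rule ccontr)
    assume "\<not> (a \<in> PId Q \<or> b \<in> PId Q)"
    then have na: "a \<notin> PId Q" and nb: "b \<notin> PId Q" by auto
    define pa where "pa = proj Q a"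
    define pb where "pb = proj Q b"
    define ra where "ra = a - pa"
    define rb where "rb = b - pb"
    have I: "is_ideal (PId Q :: ('n, 'k) mpoly set)" by (rule is_ideal_PId)
    have ra: "ra \<in> PId Q" unfolding ra_def pa_def by (rule proj_rest)
    have rb: "rb \<in> PId Q" unfolding rb_def pb_def by (rule proj_rest)
    have "a * b = pa * pb + (pa * rb + pb * ra + ra * rb)"
      unfolding ra_def rb_def by (simp add: algebra_simps)
    moreover have "pa * rb + pb * ra + ra * rb \<in> PId Q"
      using I ra rb unfolding is_ideal_def by blast
    ultimately have "pa * pb \<in> PId Q"
      using ab ideal_diff[OF I] by (metis add_diff_cancel_right')
    moreover have "pa * pb \<noteq> 0" unfolding pa_def pb_def
      using proj_nz[OF na] proj_nz[OF nb] mpoly_no_zero_div by blast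
    then obtain u where u: "u \<in> ks (pa * pb)" by fastforce
    then obtain v w where "u = v + w" "v \<in> ks pa" "w \<in> ks pb" using keys_mult_sub by blast
    then have "ks u \<inter> Q = {}" unfolding pa_def pb_def using proj_keys keys_add_nat by (metis Int_Un_distrib2 sup_bot.right_neutral)
    ultimately show False using u unfolding mem_PId by blast
  qed
qed

lemma monomial_prime_PId: "monomial_prime (PId Q :: ('n::finite, 'k::field) mpoly set)"
  unfolding monomial_prime_def monomial_ideal_def
proof (intro conjI)
  show "is_prime_ideal (PId Q :: ('n, 'k) mpoly set)" by (rule prime_PId)
  show "\<exists>G\<subseteq>range monom. (PId Q :: ('n, 'k) mpoly set) = ideal_gen G"
  proof -
    have "(PId Q :: ('n, 'k) mpoly set) = ideal_gen (monom ` ind ` ((\<lambda>j. {j}) ` Q))"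
      unfolding PId_def by (rule Id_gen) auto
    then show ?thesis by blast
  qed
qed


lemma PId_mono: "Q \<subseteq> Q' \<Longrightarrow> PId Q \<subseteq> PId Q'"
  unfolding subset_iff[of "PId Q"] mem_PId by blast

lemma var_in_PId: "var j \<in> PId Q \<longleftrightarrow> j \<in> Q"
  unfolding mem_PId var_def by simp

lemma dim_PId:
  "dim_quot (PId Q :: ('n::finite, 'k::field) mpoly set) \<ge> enat (card (UNIV :: 'n set) - card Q)"
proof -
  obtain xs :: "'n list" where xs: "set xs = UNIV - Q" "distinct xs"
    using finite_distinct_list[of "UNIV - Q"] by auto
  have len: "length xs = card (UNIV :: 'n set) - card Q"
    using xs distinct_card[of xs] by (metis card_Diff_subset finite subset_UNIV)
  define C where "C i = (PId (Q \<union> set (take i xs)) :: ('n, 'k) mpoly set)" for i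
  have "prime_chain C (length xs)"
    unfolding prime_chain_def
  proof (intro conjI allI impI)
    fix i show "is_prime_ideal (C i)" unfolding C_def by (rule prime_PId)
  next
    fix i assume i: "i < length xs"
    have tk: "take (Suc i) xs = take i xs @ [xs ! i]" using i by (simp add: take_Suc_conv_app_nth)
    have "distinct (take (Suc i) xs)" using xs(2) by simp
    then have n1: "xs ! i \<notin> set (take i xs)" using tk by simp
    have n2: "xs ! i \<notin> Q" using xs(1) i nth_mem by fastforce
    have "C i \<subseteq> C (Suc i)" unfolding C_def using tk by (intro PId_mono) auto
    moreover have "var (xs ! i) \<in> C (Suc i)" unfolding C_def var_in_PId using tk by simp
    moreover have "var (xs ! i) \<notin> C i" unfolding C_def var_in_PId using n1 n2 by simp
    ultimately show "C i \<subset> C (Suc i)" by blast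
  qed
  moreover have "PId Q \<subseteq> C 0" unfolding C_def by simp
  ultimately have "length xs \<in> {k. \<exists>Q'. prime_chain Q' k \<and> (PId Q :: ('n, 'k) mpoly set) \<subseteq> Q' 0}" by blast
  then have "enat (length xs) \<le> dim_quot (PId Q :: ('n, 'k) mpoly set)"
    unfolding dim_quot_def by (rule SUP_upper)
  then show ?thesis using len by simp
qed

definition shift :: "('n \<Rightarrow>\<^sub>0 nat) \<Rightarrow> ('n, 'k::field) mpoly \<Rightarrow> ('n, 'k) mpoly" where
  "shift u f = Abs_poly_mapping (\<lambda>v. lk f (v + u))"

lemma lookup_shift: "lk (shift u f) v = lk f (v + u)"
proof -
  have "{v. lk f (v + u) \<noteq> 0} \<subseteq> (\<lambda>w. w - u) ` ks f"
  proof
    fix v assume "v \<in> {v. lk f (v + u) \<noteq> 0}"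
    then have "v + u \<in> ks f" by (simp add: in_keys_iff)
    then show "v \<in> (\<lambda>w. w - u) ` ks f" by (metis add_diff_cancel_right' image_eqI)
  qed
  then have "finite {v. lk f (v + u) \<noteq> 0}" by (rule finite_subset) simp
  then show ?thesis unfolding shift_def by simp
qed

lemma shift_add: "shift u (f + g) = shift u f + shift u g"
  by (rule poly_mapping_eqI) (simp add: lookup_shift lookup_add)

lemma shift_sum: "shift u (sum h A) = (\<Sum>x\<in>A. shift u (h x))"
  by (rule poly_mapping_eqI) (simp add: lookup_shift Poly_Mapping.lookup_sum)

lemma keys_plus_ind: "finite U \<Longrightarrow> ks (v + ind U) = ks v \<union> U"
  by (simp add: keys_add_nat keys_ind)

lemma shift_single:
  assumes "finite U"
  shows "shift (ind U) (sg z c :: ('n, 'k::field) mpoly) = (if U \<subseteq> ks z then sg (z - ind U) c else 0)"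
proof (rule poly_mapping_eqI)
  fix x
  show "lk (shift (ind U) (sg z c :: ('n, 'k::field) mpoly)) x = lk (if U \<subseteq> ks z then sg (z - ind U) c else 0) x"
  proof (cases "U \<subseteq> ks z")
    case True
    then have z: "z = (z - ind U) + ind U" using ind_le assms by metis
    have "(z = x + ind U) \<longleftrightarrow> (z - ind U = x)"
      by (metis z add_right_cancel)
    then show ?thesis using True by (simp add: lookup_shift lookup_single_if)
  next
    case False
    have "z \<noteq> x + ind U" using False keys_plus_ind[OF assms, of x] by auto
    then show ?thesis using False by (simp add: lookup_shift lookup_single_if)
  qed
qed

lemma single_in_PId: "ks z \<inter> Q \<noteq> {} \<Longrightarrow> sg z c \<in> PId Q"
  unfolding mem_PId by simp

lemma term_in_P:
  fixes G :: "'n set set" and U Q :: "'n set"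
  assumes fin: "finite U" and H: "\<forall>T. cov G (T \<union> U) \<longleftrightarrow> T \<inter> Q \<noteq> {}"
    and w: "cov (insert U G) (ks w)"
  shows "shift (ind U) (sg v a * sg w b) - sg v a * shift (ind U) (sg w b :: ('n, 'k::field) mpoly) \<in> PId Q"
proof (cases "U \<subseteq> ks w")
  case True
  define r where "r = w - ind U"
  have w': "w = r + ind U" using ind_le fin True unfolding r_def by metis
  have "U \<subseteq> ks (v + w)" using True by (auto simp: keys_add_nat)
  moreover have "v + w - ind U = v + r"
    unfolding w' by (metis add.assoc add_diff_cancel_right')
  ultimately have "shift (ind U) (sg v a * sg w b) = sg v a * shift (ind U) (sg w b :: ('n, 'k) mpoly)"
    using True by (simp add: Poly_Mapping.mult_single shift_single[OF fin] r_def)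
  then show ?thesis by (simp add: mem_PId)
next
  case False
  then have cG: "cov G (ks w)" using w unfolding cov_def by auto
  have "shift (ind U) (sg (v + w) (a * b) :: ('n, 'k) mpoly) \<in> PId Q"
  proof (cases "U \<subseteq> ks (v + w)")
    case True
    define r where "r = v + w - ind U"
    have vw: "v + w = r + ind U" using ind_le fin True unfolding r_def by metis
    have "ks (v + w) = ks r \<union> U" unfolding vw by (rule keys_plus_ind[OF fin])
    then have "ks w \<subseteq> ks r \<union> U" using keys_add_nat[of v w] by blast
    then have "cov G (ks r \<union> U)" using cG cov_mono by blast
    then have "ks r \<inter> Q \<noteq> {}" using H by blast
    then have "sg r (a * b) \<in> (PId Q :: ('n, 'k) mpoly set)" by (rule single_in_PId)
    moreover have "shift (ind U) (sg (v + w) (a * b) :: ('n, 'k) mpoly) = sg r (a * b)"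
      using True by (simp add: shift_single[OF fin] r_def)
    ultimately show ?thesis by simp
  next
    case False
    then show ?thesis by (simp add: shift_single[OF fin] mem_PId)
  qed
  then show ?thesis using False by (simp add: Poly_Mapping.mult_single shift_single[OF fin])
qed


lemma keys_shift: "v \<in> ks (shift u f) \<longleftrightarrow> v + u \<in> ks f"
  by (simp add: in_keys_iff lookup_shift)

lemma zero_in_PId: "0 \<in> PId Q"
  by (simp add: mem_PId)

lemma mult_monom_lookup: "lk (g * monom u :: ('n, 'k::field) mpoly) (v + u) = lk g v"
proof -
  have "g * monom u = (\<Sum>w\<in>ks g. sg w (lk g w)) * monom u" using poly_sum_single[of g] by simp
  also have "\<dots> = (\<Sum>w\<in>ks g. sg (w + u) (lk g w))" by (simp add: sum_distrib_right monom_mult)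
  finally have "lk (g * monom u) (v + u) = (\<Sum>w\<in>ks g. if w = v then lk g w else 0)"
    by (simp add: Poly_Mapping.lookup_sum lookup_single_if)
  also have "\<dots> = lk g v" by (simp add: in_keys_iff)
  finally show ?thesis .
qed

lemma quot_iso:
  fixes G :: "'n set set" and U Q :: "'n set"
  assumes fin: "\<forall>g\<in>G. finite g" and finU: "finite U"
    and H: "\<forall>T. cov G (T \<union> U) \<longleftrightarrow> T \<inter> Q \<noteq> {}"
  shows "graded_quot_iso (Id (insert U G)) (Id G) (PId Q :: ('n, 'k::field) mpoly set) (ind U)"
  unfolding graded_quot_iso_def
proof (intro conjI exI[of _ "shift (ind U)"])
  let ?u = "ind U"
  let ?J' = "Id (insert U G) :: ('n, 'k) mpoly set"
  let ?J = "Id G :: ('n, 'k) mpoly set"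
  let ?P = "PId Q :: ('n, 'k) mpoly set"
  have I: "is_ideal ?P" by (rule is_ideal_PId)
  show "?J \<subseteq> ?J'" unfolding Id_def cov_def by auto
  show "\<forall>f\<in>?J'. \<forall>g\<in>?J'. shift ?u (f + g) = shift ?u f + shift ?u g" by (simp add: shift_add)
  show "\<forall>s. \<forall>f\<in>?J'. shift ?u (s * f) - s * shift ?u f \<in> ?P"
  proof (intro allI ballI)
    fix s f :: "('n, 'k) mpoly" assume f: "f \<in> ?J'"
    have e1: "(\<Sum>v\<in>ks s. sg v (lk s v)) = s" by (rule poly_sum_single[symmetric])
    have e2: "(\<Sum>w\<in>ks f. sg w (lk f w)) = f" by (rule poly_sum_single[symmetric])
    have "s * f = (\<Sum>v\<in>ks s. sg v (lk s v)) * (\<Sum>w\<in>ks f. sg w (lk f w))"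
      using e1 e2 by simp
    also have "\<dots> = (\<Sum>v\<in>ks s. \<Sum>w\<in>ks f. sg v (lk s v) * sg w (lk f w))"
      by (rule sum_product)
    finally have sf: "s * f = \<dots>" .
    have "s * shift ?u f = (\<Sum>v\<in>ks s. sg v (lk s v)) * (\<Sum>w\<in>ks f. shift ?u (sg w (lk f w)))"
      using e1 e2 by (simp flip: shift_sum)
    also have "\<dots> = (\<Sum>v\<in>ks s. \<Sum>w\<in>ks f. sg v (lk s v) * shift ?u (sg w (lk f w)))"
      by (rule sum_product)
    finally have ssf: "s * shift ?u f = \<dots>" .
    have "shift ?u (s * f) - s * shift ?u f =
      (\<Sum>v\<in>ks s. \<Sum>w\<in>ks f. shift ?u (sg v (lk s v) * sg w (lk f w)) - sg v (lk s v) * shift ?u (sg w (lk f w)))"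
      unfolding sf ssf by (simp add: shift_sum sum_subtractf)
    also have "\<dots> \<in> ?P"
    proof (rule ideal_sum[OF I], rule ideal_sum[OF I])
      fix v w assume "w \<in> ks f"
      then have "cov (insert U G) (ks w)" using f unfolding Id_def by auto
      then show "shift ?u (sg v (lk s v) * sg w (lk f w)) - sg v (lk s v) * shift ?u (sg w (lk f w)) \<in> ?P"
        by (rule term_in_P[OF finU H])
    qed
    finally show "shift ?u (s * f) - s * shift ?u f \<in> ?P" .
  qed
  show "\<forall>f\<in>?J'. (shift ?u f \<in> ?P) = (f \<in> ?J)"
  proof (intro ballI iffI)
    fix f assume f: "f \<in> ?J'" and sP: "shift ?u f \<in> ?P"
    show "f \<in> ?J" unfolding Id_def
    proof (clarify)
      fix w assume w: "w \<in> ks f"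
      then have c: "cov (insert U G) (ks w)" using f unfolding Id_def by auto
      show "cov G (ks w)"
      proof (cases "U \<subseteq> ks w")
        case True
        define r where "r = w - ?u"
        have wr: "w = r + ?u" using ind_le finU True unfolding r_def by metis
        have "r \<in> ks (shift ?u f)" using w wr keys_shift by metis
        then have "ks r \<inter> Q \<noteq> {}" using sP unfolding mem_PId by blast
        then have "cov G (ks r \<union> U)" using H by blast
        moreover have "ks w = ks r \<union> U" unfolding wr by (rule keys_plus_ind[OF finU])
        ultimately show ?thesis by simp
      next
        case False then show ?thesis using c unfolding cov_def by auto
      qed
    qed
  next
    fix f assume f: "f \<in> ?J'" and fJ: "f \<in> ?J"
    show "shift ?u f \<in> ?P" unfolding mem_PId
    proof
      fix v assume "v \<in> ks (shift ?u f)"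
      then have "v + ?u \<in> ks f" by (simp add: keys_shift)
      then have "cov G (ks (v + ?u))" using fJ unfolding Id_def by auto
      then have "cov G (ks v \<union> U)" by (simp add: keys_plus_ind[OF finU])
      then show "ks v \<inter> Q \<noteq> {}" using H by blast
    qed
  qed
  show "\<forall>g. \<exists>f\<in>?J'. g - shift ?u f \<in> ?P"
  proof
    fix g :: "('n, 'k) mpoly"
    have "g * monom ?u \<in> ?J'" unfolding Id_def
    proof (clarify)
      fix w assume "w \<in> ks (g * monom ?u)"
      then obtain a b where "w = a + b" "b \<in> ks (monom ?u :: ('n, 'k) mpoly)" using keys_mult_sub by blast
      then have "w = a + ?u" by (simp add: keys_monom)
      then have "U \<subseteq> ks w" by (simp add: keys_plus_ind[OF finU])
      then show "cov (insert U G) (ks w)" unfolding cov_def by blast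
    qed
    moreover have "shift ?u (g * monom ?u) = g"
      by (rule poly_mapping_eqI) (simp add: lookup_shift mult_monom_lookup)
    ultimately show "\<exists>f\<in>?J'. g - shift ?u f \<in> ?P" using zero_in_PId by (metis diff_self)
  qed
  show "\<forall>f\<in>?J'. \<forall>d. homogeneous_of f d \<longrightarrow>
          (\<exists>h. shift ?u f - h \<in> ?P \<and> (\<forall>u\<in>ks h. u + ?u = d))"
  proof (intro ballI allI impI)
    fix f :: "('n, 'k) mpoly" and d assume "homogeneous_of f d"
    then have "ks f \<subseteq> {d}" unfolding homogeneous_of_def .
    then have "\<forall>v\<in>ks (shift ?u f). v + ?u = d" by (auto simp: keys_shift)
    then show "\<exists>h. shift ?u f - h \<in> ?P \<and> (\<forall>u\<in>ks h. u + ?u = d)"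
      using zero_in_PId by (intro exI[of _ "shift ?u f"]) simp
  qed
qed


fun good :: "'n set set \<Rightarrow> ('n set \<times> 'n set) list \<Rightarrow> bool" where
  "good G [] = cov G {}"
| "good G ((U, Q) # L) = ((\<forall>T. cov G (T \<union> U) \<longleftrightarrow> T \<inter> Q \<noteq> {}) \<and> good (insert U G) L)"

lemma cov_insert: "cov (insert U G) X \<longleftrightarrow> U \<subseteq> X \<or> cov G X"
  unfolding cov_def by blast

lemma cov_image: "cov (f ` G) X \<longleftrightarrow> (\<exists>g\<in>G. f g \<subseteq> X)"
  unfolding cov_def by blast

lemma good_cong: "(\<And>X. cov G X = cov G' X) \<Longrightarrow> good G L = good G' L"
proof (induction L arbitrary: G G')
  case Nil then show ?case by (simp only: good.simps)
next
  case (Cons a L)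
  obtain U Q where a: "a = (U, Q)" by (cases a)
  have "\<And>X. cov (insert U G) X = cov (insert U G') X"
    using Cons.prems by (simp add: cov_insert)
  then have "good (insert U G) L = good (insert U G') L" by (rule Cons.IH)
  moreover have "(\<forall>T. cov G (T \<union> U) \<longleftrightarrow> T \<inter> Q \<noteq> {}) = (\<forall>T. cov G' (T \<union> U) \<longleftrightarrow> T \<inter> Q \<noteq> {})"
    using Cons.prems by simp
  ultimately show ?case using a by simp
qed

lemma good_compose:
  assumes "good ((\<lambda>g. g - {x}) ` G) L1" "\<forall>(U, Q)\<in>set L1. x \<notin> U \<and> x \<notin> Q"
    and "good (insert {x} G) L2"
  shows "good G (map (\<lambda>(U, Q). (insert x U, Q)) L1 @ L2)"
  using assms
proof (induction L1 arbitrary: G)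
  case Nil
  have "\<exists>g\<in>G. g - {x} \<subseteq> {}" using Nil(1) by (simp only: good.simps cov_image)
  then obtain g where g: "g \<in> G" "g \<subseteq> {x}" by blast
  have "\<And>X. cov (insert {x} G) X = cov G X"
    using g unfolding cov_def by blast
  then have "good (insert {x} G) L2 = good G L2" by (rule good_cong)
  then show ?case using Nil(3) by simp
next
  case (Cons a L1)
  obtain U Q where a: "a = (U, Q)" by (cases a)
  have xU: "x \<notin> U" "x \<notin> Q" using Cons.prems(2) a by auto
  have H: "\<forall>T. cov ((\<lambda>g. g - {x}) ` G) (T \<union> U) \<longleftrightarrow> T \<inter> Q \<noteq> {}"
    and G1: "good (insert U ((\<lambda>g. g - {x}) ` G)) L1" using Cons.prems(1) a by auto
  have c0: "g \<subseteq> T \<union> insert x U \<longleftrightarrow> g - {x} \<subseteq> (T - {x}) \<union> U" for g T by blast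
  have c1: "cov G (T \<union> insert x U) \<longleftrightarrow> cov ((\<lambda>g. g - {x}) ` G) ((T - {x}) \<union> U)" for T
    unfolding cov_image unfolding cov_def c0 ..
  have c2: "(T - {x}) \<inter> Q = T \<inter> Q" for T using xU by blast
  have step: "\<forall>T. cov G (T \<union> insert x U) \<longleftrightarrow> T \<inter> Q \<noteq> {}"
  proof
    fix T show "cov G (T \<union> insert x U) \<longleftrightarrow> T \<inter> Q \<noteq> {}"
      unfolding c1 c2[of T, symmetric] using H by blast
  qed
  have e1: "(\<lambda>g. g - {x}) ` insert (insert x U) G = insert U ((\<lambda>g. g - {x}) ` G)"
    using xU by auto
  have g1: "good ((\<lambda>g. g - {x}) ` insert (insert x U) G) L1" using G1 e1 by simp
  have "\<And>X. cov (insert {x} (insert (insert x U) G)) X = cov (insert {x} G) X"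
    by (auto simp: cov_insert)
  then have "good (insert {x} (insert (insert x U) G)) L2 = good (insert {x} G) L2" by (rule good_cong)
  then have g2: "good (insert {x} (insert (insert x U) G)) L2"
    using Cons.prems(3) by simp
  have pr: "\<forall>(U, Q)\<in>set L1. x \<notin> U \<and> x \<notin> Q" using Cons.prems(2) by simp
  have "good (insert (insert x U) G) (map (\<lambda>(U, Q). (insert x U, Q)) L1 @ L2)"
    by (rule Cons.IH[OF g1 pr g2])
  then show ?case using step a by simp
qed

lemma good_nth:
  "good G L \<Longrightarrow> i < length L \<Longrightarrow>
    (\<forall>T. cov (G \<union> fst ` set (take i L)) (T \<union> fst (L ! i)) \<longleftrightarrow> T \<inter> snd (L ! i) \<noteq> {})"
proof (induction L arbitrary: G i)
  case Nil then show ?case by simp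
next
  case (Cons a L)
  obtain U Q where a: "a = (U, Q)" by (cases a)
  show ?case
  proof (cases i)
    case 0 then show ?thesis using Cons.prems a by simp
  next
    case (Suc j)
    have "good (insert U G) L" "j < length L" using Cons.prems a Suc by auto
    from Cons.IH[OF this] have "\<forall>T. cov (insert U G \<union> fst ` set (take j L)) (T \<union> fst (L ! j)) \<longleftrightarrow> T \<inter> snd (L ! j) \<noteq> {}" .
    moreover have "insert U G \<union> fst ` set (take j L) = G \<union> fst ` set (take i (a # L))"
      using a Suc by auto
    ultimately show ?thesis using Suc by simp
  qed
qed

lemma good_end: "good G L \<Longrightarrow> cov (G \<union> fst ` set L) {}"
proof (induction L arbitrary: G)
  case Nil then show ?case by simp
next
  case (Cons a L)
  obtain U Q where a: "a = (U, Q)" by (cases a)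
  then have "good (insert U G) L" using Cons.prems by simp
  then have "cov (insert U G \<union> fst ` set L) {}" using Cons.IH by blast
  moreover have "insert U G \<union> fst ` set L = G \<union> fst ` set (a # L)" using a by auto
  ultimately show ?case by simp
qed


definition alive :: "'n set set \<Rightarrow> 'n set \<Rightarrow> 'n set set" where
  "alive E B = {g\<in>E. g \<inter> B = {}}"

definition GA :: "'n set set \<Rightarrow> 'n set \<Rightarrow> 'n set \<Rightarrow> 'n set set" where
  "GA E A B = (\<lambda>g. g - A) ` alive E B \<union> (\<lambda>b. {b}) ` B"

definition Qp :: "'n set set \<Rightarrow> 'n set \<Rightarrow> 'n set \<Rightarrow> 'n set" where
  "Qp E A B = {v. \<exists>g\<in>alive E B. g - A = {v}}"

definition dead :: "'n set set \<Rightarrow> 'n set \<Rightarrow> 'n set \<Rightarrow> 'n \<Rightarrow> bool" where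
  "dead E A B u \<longleftrightarrow> u \<notin> A \<and> u \<notin> B \<and> (\<forall>g\<in>E. u \<in> g \<longrightarrow> g \<inter> B \<noteq> {})"

definition pivc :: "'n set set \<Rightarrow> 'n set \<Rightarrow> 'n set \<Rightarrow> 'n \<Rightarrow> bool" where
  "pivc E A B y \<longleftrightarrow> y \<notin> A \<and> y \<notin> B \<and> (\<forall>g\<in>alive E B. y \<in> g \<longrightarrow> (\<exists>x\<in>g. x \<notin> A \<and> x \<noteq> y))"

definition inv :: "'n set \<Rightarrow> 'n set set \<Rightarrow> 'n set \<Rightarrow> 'n set \<Rightarrow> ('n \<Rightarrow> 'n set) \<Rightarrow> 'n option \<Rightarrow> bool" where
  "inv V E A B d p \<longleftrightarrow> A \<inter> B = {} \<and> A \<subseteq> red_vertices V E \<and> B \<subseteq> red_vertices V E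
     \<and> (\<forall>a\<in>A. d a \<in> E \<and> a \<in> d a)
     \<and> (\<forall>b\<in>B. {b} \<in> E \<or> (\<exists>u. neighbors E u b \<and> ((\<exists>a\<in>A. u \<in> d a) \<or> dead E A B u \<or> p = Some u)))
     \<and> (\<forall>y. p = Some y \<longrightarrow> pivc E A B y)"

lemma red_in: "clutter V E \<Longrightarrow> g \<in> E \<Longrightarrow> v \<in> g \<Longrightarrow> v \<in> red_vertices V E"
  unfolding clutter_def red_vertices_def by blast

lemma leaf_bound:
  fixes V :: "'n::finite set"
  assumes cl: "clutter V E" and I: "inv V E A B d p"
  shows "card (B \<union> Qp E A B) + epsilon V E \<le> card (red_vertices V E)"
proof -
  let ?Vr = "red_vertices V E"
  let ?Q = "Qp E A B"
  define Free where "Free = ?Vr - A - B - ?Q"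
  define f where "f v = (SOME e. e \<in> E \<and> v \<in> e)" for v
  have f: "f v \<in> E \<and> v \<in> f v" if "v \<in> ?Vr" for v
  proof -
    have "\<exists>e. e \<in> E \<and> v \<in> e" using that unfolding red_vertices_def by blast
    then show ?thesis unfolding f_def by (rule someI_ex)
  qed
  have AB: "A \<inter> B = {}" "A \<subseteq> ?Vr" "B \<subseteq> ?Vr" using I unfolding inv_def by auto
  have dA: "d a \<in> E \<and> a \<in> d a" if "a \<in> A" for a using I that unfolding inv_def by auto
  have resc: "{b} \<in> E \<or> (\<exists>u. neighbors E u b \<and> ((\<exists>a\<in>A. u \<in> d a) \<or> dead E A B u \<or> p = Some u))"
    if "b \<in> B" for b using I that unfolding inv_def by auto
  have piv: "pivc E A B y" if "p = Some y" for y using I that unfolding inv_def by auto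
  have Qw: "\<exists>g\<in>alive E B. g - A = {v}" if "v \<in> ?Q" for v using that unfolding Qp_def by auto
  have QVr: "?Q \<subseteq> ?Vr"
  proof
    fix v assume "v \<in> ?Q"
    then obtain g where "g \<in> alive E B" "g - A = {v}" using Qw by blast
    then show "v \<in> ?Vr" using red_in[OF cl] unfolding alive_def by blast
  qed
  have QA: "?Q \<inter> A = {}" unfolding Qp_def by blast
  have QB: "?Q \<inter> B = {}" unfolding Qp_def alive_def by blast
  define F where "F = d ` A \<union> f ` Free"
  have FE: "F \<subseteq> E" unfolding F_def Free_def using dA f by auto
  have covF: "\<exists>e\<in>F. u \<in> e" if "u \<in> A \<or> u \<in> Free \<or> (\<exists>a\<in>A. u \<in> d a)" for u
  proof -
    { assume "u \<in> A" then have ?thesis unfolding F_def using dA by blast }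
    moreover
    { assume "u \<in> Free" then have ?thesis unfolding F_def using f unfolding Free_def by blast }
    moreover
    { assume "\<exists>a\<in>A. u \<in> d a" then have ?thesis unfolding F_def by blast }
    ultimately show ?thesis using that by blast
  qed
  have notQ: "u \<notin> ?Q" if "dead E A B u \<or> pivc E A B u" for u
  proof
    assume "u \<in> ?Q"
    then obtain g where g: "g \<in> alive E B" "g - A = {u}" using Qw by blast
    then have ug: "u \<in> g" by blast
    show False using that
    proof
      assume "dead E A B u" then show False using g ug unfolding dead_def alive_def by blast
    next
      assume "pivc E A B u"
      then obtain x where "x \<in> g" "x \<notin> A" "x \<noteq> u" using g ug unfolding pivc_def by blast
      then show False using g by blast
    qed
  qed
  have dom: "edgewise_dominant V E F"
    unfolding edgewise_dominant_def
  proof (intro conjI FE ballI impI)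
    fix v assume v: "v \<in> ?Vr" and nv: "\<not> (\<exists>e\<in>F. v \<in> e) \<and> \<not> (\<exists>e\<in>E. e = {v})"
    have "v \<notin> A" using covF[of v] nv by blast
    moreover have "v \<notin> Free" using covF[of v] nv by blast
    ultimately have "v \<in> B \<or> v \<in> ?Q" using v unfolding Free_def by blast
    then show "\<exists>u. neighbors E u v \<and> (\<exists>e\<in>F. u \<in> e)"
    proof
      assume vB: "v \<in> B"
      have "{v} \<notin> E" using nv by blast
      with resc[OF vB] obtain u where u: "neighbors E u v" "(\<exists>a\<in>A. u \<in> d a) \<or> dead E A B u \<or> p = Some u"
        by blast
      obtain e where "e \<in> E" "u \<in> e" using u(1) by (auto simp: neighbors_def)
      then have uVr: "u \<in> ?Vr" using red_in[OF cl] by blast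
      have "\<exists>e\<in>F. u \<in> e" using u(2)
      proof (elim disjE)
        assume "\<exists>a\<in>A. u \<in> d a" then show ?thesis by (intro covF) blast
      next
        assume du: "dead E A B u"
        then have "u \<notin> ?Q" using notQ by blast
        then have "u \<in> Free" using du uVr unfolding Free_def dead_def by blast
        then show ?thesis by (intro covF) blast
      next
        assume "p = Some u"
        then have pu: "pivc E A B u" using piv by blast
        then have "u \<notin> ?Q" using notQ by blast
        then have "u \<in> Free" using pu uVr unfolding Free_def pivc_def by blast
        then show ?thesis by (intro covF) blast
      qed
      then show ?thesis using u(1) by blast
    next
      assume "v \<in> ?Q"
      then obtain g where g: "g \<in> alive E B" "g - A = {v}" using Qw by blast
      have gE: "g \<in> E" using g unfolding alive_def by blast
      have "g \<noteq> {v}" using nv gE by blast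
      moreover have "v \<in> g" using g by blast
      ultimately obtain a where a: "a \<in> g" "a \<noteq> v" by blast
      then have "a \<in> A" using g by blast
      moreover have "neighbors E a v" unfolding neighbors_def using a gE \<open>v \<in> g\<close> by blast
      ultimately show ?thesis using covF[of a] by blast
    qed
  qed
  have eps: "epsilon V E \<le> card F"
    unfolding epsilon_def using dom by (intro Least_le) blast
  have cF: "card F \<le> card A + card Free"
    unfolding F_def by (meson add_mono card_Un_le card_image_le finite le_trans)
  have part: "?Vr = A \<union> B \<union> ?Q \<union> Free" using AB QVr unfolding Free_def by blast
  have "card ?Vr = card A + card B + card ?Q + card Free"
  proof -
    have "card (A \<union> B) = card A + card B" using AB by (simp add: card_Un_disjoint)
    moreover have "card (A \<union> B \<union> ?Q) = card (A \<union> B) + card ?Q"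
      using QA QB by (intro card_Un_disjoint) auto
    moreover have "card (A \<union> B \<union> ?Q \<union> Free) = card (A \<union> B \<union> ?Q) + card Free"
      unfolding Free_def by (intro card_Un_disjoint) auto
    ultimately show ?thesis using part by simp
  qed
  moreover have "card (B \<union> ?Q) = card B + card ?Q" using QB by (simp add: card_Un_disjoint Int_commute)
  ultimately show ?thesis using eps cF by linarith
qed


lemma cov_Un: "cov (G \<union> H) X \<longleftrightarrow> cov G X \<or> cov H X"
  unfolding cov_def by blast

lemma cov_GA: "cov (GA E A B) X \<longleftrightarrow> (\<exists>g\<in>alive E B. g - A \<subseteq> X) \<or> (\<exists>b\<in>B. b \<in> X)"
  unfolding GA_def cov_Un cov_image by simp

lemma prime_case:
  assumes "\<forall>g\<in>alive E B. (g - A) \<inter> Qp E A B \<noteq> {}"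
  shows "good (GA E A B) [({}, B \<union> Qp E A B)]"
proof -
  have "cov (GA E A B) T \<longleftrightarrow> T \<inter> (B \<union> Qp E A B) \<noteq> {}" for T
  proof
    assume "cov (GA E A B) T"
    then have "(\<exists>g\<in>alive E B. g - A \<subseteq> T) \<or> (\<exists>b\<in>B. b \<in> T)" by (simp only: cov_GA)
    then show "T \<inter> (B \<union> Qp E A B) \<noteq> {}"
    proof
      assume "\<exists>g\<in>alive E B. g - A \<subseteq> T"
      then obtain g where "g \<in> alive E B" "g - A \<subseteq> T" by blast
      then have "(g - A) \<inter> Qp E A B \<noteq> {}" "g - A \<subseteq> T" using assms by auto
      then show ?thesis by blast
    qed blast
  next
    assume "T \<inter> (B \<union> Qp E A B) \<noteq> {}"
    then obtain v where v: "v \<in> T" "v \<in> B \<or> v \<in> Qp E A B" by blast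
    from v(2) have "(\<exists>g\<in>alive E B. g - A \<subseteq> T) \<or> (\<exists>b\<in>B. b \<in> T)"
    proof
      assume "v \<in> Qp E A B"
      then obtain g where g: "g \<in> alive E B" "g - A = {v}" unfolding Qp_def by blast
      then have "g - A \<subseteq> T" using v(1) by simp
      then show ?thesis using g(1) by (intro disjI1 bexI)
    next
      assume "v \<in> B"
      then show ?thesis using v(1) by (intro disjI2 bexI)
    qed
    then show "cov (GA E A B) T" by (simp only: cov_GA)
  qed
  moreover have "cov (insert {} (GA E A B)) {}" by (simp add: cov_insert)
  ultimately show ?thesis by simp
qed

lemma colon_cov:
  assumes "x \<notin> B"
  shows "cov ((\<lambda>g. g - {x}) ` GA E A B) X = cov (GA E (insert x A) B) X"
proof -
  have e1: "(\<lambda>g. g - {x}) ` (\<lambda>g. g - A) ` alive E B = (\<lambda>g. g - insert x A) ` alive E B"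
    unfolding image_image by (intro image_cong) auto
  have e2: "(\<lambda>g. g - {x}) ` (\<lambda>b. {b}) ` B = (\<lambda>b. {b}) ` B"
    unfolding image_image using assms by (intro image_cong) auto
  show ?thesis unfolding GA_def image_Un e1 e2 ..
qed

lemma plus_cov:
  assumes "x \<notin> A"
  shows "cov (insert {x} (GA E A B)) X = cov (GA E A (insert x B)) X"
proof
  assume "cov (insert {x} (GA E A B)) X"
  then have "x \<in> X \<or> (\<exists>g\<in>alive E B. g - A \<subseteq> X) \<or> (\<exists>b\<in>B. b \<in> X)"
    by (simp only: cov_insert cov_GA) simp
  then have "(\<exists>g\<in>alive E (insert x B). g - A \<subseteq> X) \<or> (\<exists>b\<in>insert x B. b \<in> X)"
  proof (elim disjE)
    assume "\<exists>g\<in>alive E B. g - A \<subseteq> X"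
    then obtain g where g: "g \<in> alive E B" "g - A \<subseteq> X" by blast
    show ?thesis
    proof (cases "x \<in> g")
      case True then have "x \<in> X" using g assms by blast
      then show ?thesis by blast
    next
      case False then have "g \<in> alive E (insert x B)" using g unfolding alive_def by blast
      then show ?thesis using g by blast
    qed
  qed auto
  then show "cov (GA E A (insert x B)) X" by (simp only: cov_GA)
next
  assume "cov (GA E A (insert x B)) X"
  then have "(\<exists>g\<in>alive E (insert x B). g - A \<subseteq> X) \<or> (\<exists>b\<in>insert x B. b \<in> X)"
    by (simp only: cov_GA)
  moreover have "alive E (insert x B) \<subseteq> alive E B" unfolding alive_def by blast
  ultimately have "x \<in> X \<or> (\<exists>g\<in>alive E B. g - A \<subseteq> X) \<or> (\<exists>b\<in>B. b \<in> X)" by blast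
  then show "cov (insert {x} (GA E A B)) X" by (simp only: cov_insert cov_GA) simp
qed


lemma inv_parts:
  assumes "inv V E A B d p"
  shows "A \<inter> B = {}" "A \<subseteq> red_vertices V E" "B \<subseteq> red_vertices V E"
    "\<And>a. a \<in> A \<Longrightarrow> d a \<in> E \<and> a \<in> d a"
    "\<And>b. b \<in> B \<Longrightarrow> {b} \<in> E \<or> (\<exists>u. neighbors E u b \<and> ((\<exists>a\<in>A. u \<in> d a) \<or> dead E A B u \<or> p = Some u))"
    "\<And>y. p = Some y \<Longrightarrow> pivc E A B y"
  using assms unfolding inv_def by auto

lemma choose_split:
  assumes I: "inv V E A B d p" and nc: "\<not> cov (GA E A B) {}"
    and g0: "g0 \<in> alive E B" "(g0 - A) \<inter> Qp E A B = {}"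
  shows "\<exists>y g x. g \<in> alive E B \<and> y \<in> g \<and> x \<in> g \<and> x \<notin> A \<and> x \<noteq> y \<and> pivc E A B y \<and>
    (\<forall>b\<in>B. {b} \<in> E \<or> (\<exists>u. neighbors E u b \<and> ((\<exists>a\<in>A. u \<in> d a) \<or> dead E A B u \<or> u = y)))"
proof (cases "\<exists>y. p = Some y \<and> (\<exists>g\<in>alive E B. y \<in> g)")
  case True
  then obtain y g where yg: "p = Some y" "g \<in> alive E B" "y \<in> g" by blast
  have pv: "pivc E A B y" using inv_parts(6)[OF I yg(1)] .
  then obtain x where x: "x \<in> g" "x \<notin> A" "x \<noteq> y" using yg unfolding pivc_def by blast
  have "\<forall>b\<in>B. {b} \<in> E \<or> (\<exists>u. neighbors E u b \<and> ((\<exists>a\<in>A. u \<in> d a) \<or> dead E A B u \<or> u = y))"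
  proof
    fix b assume "b \<in> B"
    from inv_parts(5)[OF I this] show "{b} \<in> E \<or> (\<exists>u. neighbors E u b \<and> ((\<exists>a\<in>A. u \<in> d a) \<or> dead E A B u \<or> u = y))"
      using yg(1) by auto
  qed
  then show ?thesis using yg x pv by blast
next
  case False
  have "g0 - A \<noteq> {}"
  proof
    assume "g0 - A = {}"
    then have "cov (GA E A B) {}" unfolding cov_GA using g0(1) by blast
    then show False using nc by blast
  qed
  then obtain y where y: "y \<in> g0" "y \<notin> A" by blast
  have yQ: "y \<notin> Qp E A B" using g0(2) y by blast
  have pv: "pivc E A B y" unfolding pivc_def
  proof (intro conjI ballI impI)
    show "y \<notin> A" by (rule y(2))
    show "y \<notin> B" using g0(1) y(1) unfolding alive_def by blast
  next
    fix g assume g: "g \<in> alive E B" "y \<in> g"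
    show "\<exists>x\<in>g. x \<notin> A \<and> x \<noteq> y"
    proof (rule ccontr)
      assume "\<not> (\<exists>x\<in>g. x \<notin> A \<and> x \<noteq> y)"
      then have "g - A = {y}" using g(2) y(2) by blast
      then have "y \<in> Qp E A B" unfolding Qp_def using g(1) by blast
      then show False using yQ by blast
    qed
  qed
  then obtain x where x: "x \<in> g0" "x \<notin> A" "x \<noteq> y" using g0(1) y(1) unfolding pivc_def by blast
  have "\<forall>b\<in>B. {b} \<in> E \<or> (\<exists>u. neighbors E u b \<and> ((\<exists>a\<in>A. u \<in> d a) \<or> dead E A B u \<or> u = y))"
  proof
    fix b assume "b \<in> B"
    have dd: "dead E A B u" if "p = Some u" for u
    proof -
      have "pivc E A B u" using inv_parts(6)[OF I that] .
      moreover have "\<forall>g\<in>E. u \<in> g \<longrightarrow> g \<inter> B \<noteq> {}" using False that unfolding alive_def by blast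
      ultimately show ?thesis unfolding pivc_def dead_def by blast
    qed
    from inv_parts(5)[OF I \<open>b \<in> B\<close>] show "{b} \<in> E \<or> (\<exists>u. neighbors E u b \<and> ((\<exists>a\<in>A. u \<in> d a) \<or> dead E A B u \<or> u = y))"
      using dd by blast
  qed
  then show ?thesis using g0(1) y(1) x pv by blast
qed


definition resok :: "'n set \<Rightarrow> 'n set set \<Rightarrow> 'n set \<Rightarrow> ('n set \<times> 'n set) list \<Rightarrow> bool" where
  "resok V E A L \<longleftrightarrow> (\<forall>(U, Q)\<in>set L. U \<inter> A = {} \<and> Q \<inter> A = {} \<and> card Q + epsilon V E \<le> card (red_vertices V E))"

lemma main_comb:
  fixes V :: "'n::finite set"
  assumes cl: "clutter V E"
  shows "inv V E A B d p \<Longrightarrow> \<exists>L. good (GA E A B) L \<and> resok V E A L"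
proof (induction "card (UNIV - (A \<union> B))" arbitrary: A B d p rule: less_induct)
  case less
  note I = less.prems
  consider (triv) "cov (GA E A B) {}"
    | (prime) "\<not> cov (GA E A B) {}" "\<forall>g\<in>alive E B. (g - A) \<inter> Qp E A B \<noteq> {}"
    | (split) "\<not> cov (GA E A B) {}" "\<exists>g0\<in>alive E B. (g0 - A) \<inter> Qp E A B = {}"
    by blast
  then show ?case
  proof cases
    case triv
    then have "good (GA E A B) []" by simp
    moreover have "resok V E A []" unfolding resok_def by simp
    ultimately show ?thesis by blast
  next
    case prime
    have g: "good (GA E A B) [({}, B \<union> Qp E A B)]" using prime(2) by (rule prime_case)
    have "(B \<union> Qp E A B) \<inter> A = {}" using inv_parts(1)[OF I] unfolding Qp_def by blast
    moreover have "card (B \<union> Qp E A B) + epsilon V E \<le> card (red_vertices V E)"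
      by (rule leaf_bound[OF cl I])
    ultimately have "resok V E A [({}, B \<union> Qp E A B)]" unfolding resok_def by simp
    then show ?thesis using g by blast
  next
    case split
    then obtain g0 where g0: "g0 \<in> alive E B" "(g0 - A) \<inter> Qp E A B = {}" by blast
    obtain y g x where yg: "g \<in> alive E B" "y \<in> g" "x \<in> g" "x \<notin> A" "x \<noteq> y" "pivc E A B y"
      and resc: "\<forall>b\<in>B. {b} \<in> E \<or> (\<exists>u. neighbors E u b \<and> ((\<exists>a\<in>A. u \<in> d a) \<or> dead E A B u \<or> u = y))"
      using choose_split[OF I split(1) g0] by blast
    have gE: "g \<in> E" and gB: "g \<inter> B = {}" using yg(1) unfolding alive_def by auto
    have xB: "x \<notin> B" using gB yg(3) by blast
    have xVr: "x \<in> red_vertices V E" using red_in[OF cl gE yg(3)] .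
    have deadx: "u \<noteq> x" if "dead E A B u" for u
      using that gE gB yg(3) unfolding dead_def by blast
    have nbxy: "neighbors E y x" unfolding neighbors_def using gE yg(2,3,5) by blast
    define A' where "A' = insert x A"
    define d' where "d' = d(x := g)"
    have I1: "inv V E A' B d' None"
      unfolding inv_def
    proof (intro conjI ballI allI impI)
      show "A' \<inter> B = {}" unfolding A'_def using inv_parts(1)[OF I] xB by blast
      show "A' \<subseteq> red_vertices V E" unfolding A'_def using inv_parts(2)[OF I] xVr by blast
      show "B \<subseteq> red_vertices V E" using inv_parts(3)[OF I] .
    next
      fix a assume "a \<in> A'"
      then show "d' a \<in> E"
        unfolding A'_def d'_def using inv_parts(4)[OF I] gE yg(3) by (cases "a = x") auto
    next
      fix a assume "a \<in> A'"
      then show "a \<in> d' a"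
        unfolding A'_def d'_def using inv_parts(4)[OF I] gE yg(3) by (cases "a = x") auto
    next
      fix b assume b: "b \<in> B"
      from resc b have "{b} \<in> E \<or> (\<exists>u. neighbors E u b \<and> ((\<exists>a\<in>A. u \<in> d a) \<or> dead E A B u \<or> u = y))"
        by blast
      then show "{b} \<in> E \<or> (\<exists>u. neighbors E u b \<and> ((\<exists>a\<in>A'. u \<in> d' a) \<or> dead E A' B u \<or> None = Some u))"
      proof
        assume "{b} \<in> E" then show ?thesis by blast
      next
        assume "\<exists>u. neighbors E u b \<and> ((\<exists>a\<in>A. u \<in> d a) \<or> dead E A B u \<or> u = y)"
        then obtain u where nb: "neighbors E u b" and r: "(\<exists>a\<in>A. u \<in> d a) \<or> dead E A B u \<or> u = y" by blast
        from r have "(\<exists>a\<in>A'. u \<in> d' a) \<or> dead E A' B u"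
        proof (elim disjE)
          assume "\<exists>a\<in>A. u \<in> d a"
          then obtain a where "a \<in> A" "u \<in> d a" by blast
          moreover have "a \<noteq> x" using \<open>a \<in> A\<close> yg(4) by blast
          ultimately show ?thesis unfolding A'_def d'_def by auto
        next
          assume du: "dead E A B u"
          then have "u \<noteq> x" by (rule deadx)
          then show ?thesis using du unfolding dead_def A'_def by blast
        next
          assume "u = y"
          then show ?thesis unfolding A'_def d'_def using yg(2) by auto
        qed
        then show ?thesis using nb by blast
      qed
    next
      fix y' :: 'n assume "None = Some y'" then show "pivc E A' B y'" by simp
    qed
    have lt1: "card (UNIV - (A' \<union> B)) < card (UNIV - (A \<union> B))"
      unfolding A'_def using yg(4) xB by (intro psubset_card_mono) auto
    obtain L1 where L1: "good (GA E A' B) L1" "resok V E A' L1"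
      using less.hyps[OF lt1 I1] by blast
    define B' where "B' = insert x B"
    have I2: "inv V E A B' d (Some y)"
      unfolding inv_def
    proof (intro conjI ballI allI impI)
      show "A \<inter> B' = {}" unfolding B'_def using inv_parts(1)[OF I] yg(4) by blast
      show "A \<subseteq> red_vertices V E" using inv_parts(2)[OF I] .
      show "B' \<subseteq> red_vertices V E" unfolding B'_def using inv_parts(3)[OF I] xVr by blast
    next
      fix a assume "a \<in> A" then show "d a \<in> E" using inv_parts(4)[OF I] by blast
    next
      fix a assume "a \<in> A" then show "a \<in> d a" using inv_parts(4)[OF I] by blast
    next
      fix b assume b: "b \<in> B'"
      show "{b} \<in> E \<or> (\<exists>u. neighbors E u b \<and> ((\<exists>a\<in>A. u \<in> d a) \<or> dead E A B' u \<or> Some y = Some u))"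
      proof (cases "b = x")
        case True then show ?thesis using nbxy by blast
      next
        case False
        then have "b \<in> B" using b unfolding B'_def by blast
        with resc have "{b} \<in> E \<or> (\<exists>u. neighbors E u b \<and> ((\<exists>a\<in>A. u \<in> d a) \<or> dead E A B u \<or> u = y))"
          by blast
        then show ?thesis
        proof
          assume "{b} \<in> E" then show ?thesis by blast
        next
          assume "\<exists>u. neighbors E u b \<and> ((\<exists>a\<in>A. u \<in> d a) \<or> dead E A B u \<or> u = y)"
          then obtain u where nb: "neighbors E u b" and r: "(\<exists>a\<in>A. u \<in> d a) \<or> dead E A B u \<or> u = y" by blast
          from r have "(\<exists>a\<in>A. u \<in> d a) \<or> dead E A B' u \<or> Some y = Some u"
          proof (elim disjE)
            assume du: "dead E A B u"
            then have "u \<noteq> x" by (rule deadx)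
            then show ?thesis using du unfolding dead_def B'_def by blast
          qed auto
          then show ?thesis using nb by blast
        qed
      qed
    next
      fix y' :: 'n assume "Some y = Some y'"
      then have "y' = y" by simp
      then show "pivc E A B' y'"
        using yg(6) yg(5) unfolding pivc_def B'_def alive_def by blast
    qed
    have lt2: "card (UNIV - (A \<union> B')) < card (UNIV - (A \<union> B))"
      unfolding B'_def using yg(4) xB by (intro psubset_card_mono) auto
    obtain L2 where L2: "good (GA E A B') L2" "resok V E A L2"
      using less.hyps[OF lt2 I2] by blast
    have c1: "good ((\<lambda>g. g - {x}) ` GA E A B) L1"
      using L1(1) good_cong[of "(\<lambda>g. g - {x}) ` GA E A B" "GA E A' B" L1] colon_cov[OF xB]
      unfolding A'_def by blast
    have c2: "\<forall>(U, Q)\<in>set L1. x \<notin> U \<and> x \<notin> Q"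
      using L1(2) unfolding resok_def A'_def by blast
    have c3: "good (insert {x} (GA E A B)) L2"
      using L2(1) good_cong[of "insert {x} (GA E A B)" "GA E A B'" L2] plus_cov[OF yg(4)]
      unfolding B'_def by blast
    have "good (GA E A B) (map (\<lambda>(U, Q). (insert x U, Q)) L1 @ L2)"
      by (rule good_compose[OF c1 c2 c3])
    moreover have "resok V E A (map (\<lambda>(U, Q). (insert x U, Q)) L1 @ L2)"
      using L1(2) L2(2) yg(4) unfolding resok_def A'_def by auto
    ultimately show ?thesis by blast
  qed
qed


lemma Id_mono: "G \<subseteq> G' \<Longrightarrow> Id G \<subseteq> Id G'"
  unfolding Id_def cov_def by blast

lemma graded_Id: "graded_ideal (Id G :: ('n, 'k::field) mpoly set)"
  unfolding graded_ideal_def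
proof (intro conjI ballI)
  show "is_ideal (Id G :: ('n, 'k) mpoly set)" by (rule is_ideal_Id)
next
  fix f :: "('n, 'k) mpoly" and u assume f: "f \<in> Id G" and u: "u \<in> ks f"
  have "cov G (ks u)" using f u unfolding Id_def by blast
  moreover have "ks (sg u (lk f u)) \<subseteq> {u}" by simp
  ultimately show "sg u (lk f u) \<in> Id G" unfolding Id_def by auto
qed

lemma edge_ideal_Id: "edge_ideal E = (Id E :: ('n::finite, 'k::field) mpoly set)"
proof -
  have "edge_monomial ` E = (monom ` ind ` E :: ('n, 'k) mpoly set)"
    unfolding image_image edge_monomial_def ind_def ..
  then show ?thesis unfolding edge_ideal_def by (simp add: Id_gen)
qed

lemma squarefree_ind: "squarefree_vec (ind (U :: 'n::finite set))"
  unfolding squarefree_vec_def by (simp add: lookup_ind)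

theorem corollary3p8:
  fixes V :: "'n::finite set" and E :: "'n set set"
  assumes "clutter V E"
  shows "\<exists>(m::nat) (J :: nat \<Rightarrow> ('n, 'k::field) mpoly set) (P :: nat \<Rightarrow> ('n, 'k) mpoly set)
            (a :: nat \<Rightarrow> ('n \<Rightarrow>\<^sub>0 nat)).
           J 0 = edge_ideal E \<and> J m = UNIV
         \<and> (\<forall>i\<le>m. graded_ideal (J i) \<and> edge_ideal E \<subseteq> J i)
         \<and> (\<forall>i<m. J i \<subseteq> J (Suc i))
         \<and> (\<forall>i\<in>{1..m}. monomial_prime (P i) \<and> squarefree_vec (a i)
              \<and> graded_quot_iso (J i) (J (i - 1)) (P i) (a i)
              \<and> dim_quot (P i) \<ge> enat (epsilon V E + card (UNIV :: 'n set) - card (red_vertices V E)))"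
proof -
  have I0: "inv V E {} {} (\<lambda>_. {}) None" unfolding inv_def by simp
  obtain L where L0: "good (GA E {} {}) L" and R: "resok V E {} L"
    using main_comb[OF assms I0] by blast
  have "GA E {} {} = E" unfolding GA_def alive_def by simp
  then have L: "good E L" using L0 by simp
  define Gs where "Gs i = E \<union> fst ` set (take i L)" for i
  define m where "m = length L"
  define J where "J i = (Id (Gs i) :: ('n, 'k) mpoly set)" for i
  define P where "P i = (PId (snd (L ! (i - 1))) :: ('n, 'k) mpoly set)" for i
  define a where "a i = ind (fst (L ! (i - 1)))" for i
  have J0: "J 0 = edge_ideal E" unfolding J_def Gs_def by (simp add: edge_ideal_Id)
  have Jm: "J m = UNIV"
  proof -
    have "cov (E \<union> fst ` set L) {}" using good_end[OF L] .
    then have "cov (Gs m) X" for X unfolding Gs_def m_def using cov_mono by fastforce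
    then show ?thesis unfolding J_def Id_def by blast
  qed
  have Jg: "\<forall>i\<le>m. graded_ideal (J i) \<and> edge_ideal E \<subseteq> J i"
  proof (intro allI impI conjI)
    fix i show "graded_ideal (J i)" unfolding J_def by (rule graded_Id)
    show "edge_ideal E \<subseteq> J i" unfolding J_def edge_ideal_Id Gs_def by (rule Id_mono) blast
  qed
  have Jmono: "\<forall>i<m. J i \<subseteq> J (Suc i)"
  proof (intro allI impI)
    fix i
    have "set (take i L) \<subseteq> set (take (Suc i) L)" by (rule set_take_subset_set_take) simp
    then show "J i \<subseteq> J (Suc i)" unfolding J_def Gs_def by (intro Id_mono) blast
  qed
  have Jstep: "monomial_prime (P i) \<and> squarefree_vec (a i)
              \<and> graded_quot_iso (J i) (J (i - 1)) (P i) (a i)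
              \<and> dim_quot (P i) \<ge> enat (epsilon V E + card (UNIV :: 'n set) - card (red_vertices V E))"
    if i: "i \<in> {1..m}" for i
  proof -
    define j where "j = i - 1"
    have j: "j < length L" "i = Suc j" using i unfolding j_def m_def by auto
    obtain U Q where UQ: "L ! j = (U, Q)" by (cases "L ! j")
    have H: "\<forall>T. cov (Gs j) (T \<union> U) \<longleftrightarrow> T \<inter> Q \<noteq> {}"
      using good_nth[OF L j(1)] UQ unfolding Gs_def by simp
    have Gi: "Gs i = insert U (Gs j)"
      unfolding Gs_def j(2) using j(1) UQ by (simp add: take_Suc_conv_app_nth)
    have iso: "graded_quot_iso (J i) (J (i - 1)) (P i) (a i)"
      unfolding J_def P_def a_def Gi using quot_iso[of "Gs j" U Q] H j UQ by simp
    have "(U, Q) \<in> set L" using UQ j(1) nth_mem by metis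
    then have cQ: "card Q + epsilon V E \<le> card (red_vertices V E)" using R unfolding resok_def by blast
    have "card (red_vertices V E) \<le> card (UNIV :: 'n set)" by (rule card_mono) auto
    then have "epsilon V E + card (UNIV :: 'n set) - card (red_vertices V E) \<le> card (UNIV :: 'n set) - card Q"
      using cQ by linarith
    then have e1: "enat (epsilon V E + card (UNIV :: 'n set) - card (red_vertices V E)) \<le> enat (card (UNIV :: 'n set) - card Q)"
      by simp
    have e2: "enat (card (UNIV :: 'n set) - card Q) \<le> dim_quot (P i)"
      using dim_PId[of Q] unfolding P_def j_def[symmetric] UQ by simp
    have "enat (epsilon V E + card (UNIV :: 'n set) - card (red_vertices V E)) \<le> dim_quot (P i)"
      by (rule order_trans[OF e1 e2])
    moreover have "monomial_prime (P i)" unfolding P_def by (rule monomial_prime_PId)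
    moreover have "squarefree_vec (a i)" unfolding a_def by (rule squarefree_ind)
    ultimately show ?thesis using iso by blast
  qed
  show ?thesis
    apply (rule exI[of _ m], rule exI[of _ J], rule exI[of _ P], rule exI[of _ a])
    using J0 Jm Jg Jmono Jstep by blast
qed

end
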